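(* If $h:[0,\infty)\to[\frac{\beta u_0-1}{r},\frac{\beta u_0}{r}]$ is a decreasing solution to the HJB equation with $h'(0)=0$, then there exist $z_f\in(0,d]$, $z_g\in[d,\infty)$ and real constants $A_1,B_1,A_2,B_2,a_1,b_1,a_2,b_2$ such that, with $\underline f(z)=A_1e^{\theta_1(0)z}+B_1e^{-\theta_2(0)z}$, $\bar f(z)=\frac{\beta u_0}{r}+A_2e^{\theta_1(u_0)z}+B_2e^{-\theta_2(u_0)z}$, $\underline g(z)=-\frac1r+a_1e^{\theta_1(0)z}+b_1e^{-\theta_2(0)z}$, $\bar g(z)=\frac{\beta u_0-1}{r}+a_2e^{\theta_1(u_0)z}+b_2e^{-\theta_2(u_0)z}$, $$h=\bar f\,\mathbf 1_{[0,z_f]}+\underline f\,\mathbf 1_{(z_f,d]}+\underline g\,\mathbf 1_{(d,z_g]}+\bar g\,\mathbf 1_{[z_g,\infty)\cap(d,\infty)}.$$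
   Context: Fix $\mu\in\mathbb R$, $\sigma>0$, $u_0>0$, $r>0$, $\beta>0$, $d>0$. For $u\in[0,u_0]$ let $\theta_1(u)=\frac{\sqrt{(\mu-u)^2+2r\sigma^2}+(\mu-u)}{\sigma^2}$ and $\theta_2(u)=\frac{\sqrt{(\mu-u)^2+2r\sigma^2}-(\mu-u)}{\sigma^2}$. The HJB equation is $$-rh(z)-\mu h'(z)+\tfrac{\sigma^2}{2}h''(z)+\sup_{u\in[0,u_0]}\{(\beta+h'(z))u\}=\mathbf 1_{\{z>d\}}.$$ A solution to the HJB equation is a function $h:[0,\infty)\to[\frac{\beta u_0-1}{r},\frac{\beta u_0}{r}]$ that is continuously differentiable on $[0,\infty)$, twice continuously differentiable on $[0,d]$ and on $(d,\infty)$ respectively (with $h'(0),h''(0)$ the right derivatives and $h''(d)$ the left second derivative), and satisfies the HJB equation for all $z\ge0$. *)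

theory Defs
  imports "HOL-Analysis.Analysis"
begin

definition theta1 :: "real \<Rightarrow> real \<Rightarrow> real \<Rightarrow> real \<Rightarrow> real" where
  "theta1 \<mu> \<sigma> r u = (sqrt ((\<mu> - u)\<^sup>2 + 2 * r * \<sigma>\<^sup>2) + (\<mu> - u)) / \<sigma>\<^sup>2"

definition theta2 :: "real \<Rightarrow> real \<Rightarrow> real \<Rightarrow> real \<Rightarrow> real" where
  "theta2 \<mu> \<sigma> r u = (sqrt ((\<mu> - u)\<^sup>2 + 2 * r * \<sigma>\<^sup>2) - (\<mu> - u)) / \<sigma>\<^sup>2"

text \<open>Solution of the HJB equation. h1 is the first derivative on [0,oo)
  (one-sided at 0), continuous there; h2 is the second derivative, taken within [0,d]
  on [0,d] (so one-sided at 0 and left-sided at d) and two-sided on (d,oo), continuous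
  on [0,d] and on (d,oo) respectively.\<close>
definition hjb_solution ::
  "real \<Rightarrow> real \<Rightarrow> real \<Rightarrow> real \<Rightarrow> real \<Rightarrow> real \<Rightarrow> (real \<Rightarrow> real) \<Rightarrow> bool" where
  "hjb_solution \<mu> \<sigma> u0 r \<beta> d h \<longleftrightarrow>
     (\<forall>z\<ge>0. (\<beta> * u0 - 1) / r \<le> h z \<and> h z \<le> \<beta> * u0 / r) \<and>
     (\<exists>h1 h2.
        (\<forall>z\<ge>0. (h has_real_derivative h1 z) (at z within {0..})) \<and>
        continuous_on {0..} h1 \<and>
        (\<forall>z\<in>{0..d}. (h1 has_real_derivative h2 z) (at z within {0..d})) \<and>
        continuous_on {0..d} h2 \<and>
        (\<forall>z>d. (h1 has_real_derivative h2 z) (at z)) \<and>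
        continuous_on {d<..} h2 \<and>
        (\<forall>z\<ge>0. - r * h z - \<mu> * h1 z + \<sigma>\<^sup>2 / 2 * h2 z
                  + (SUP u\<in>{0..u0}. (\<beta> + h1 z) * u)
                = (if z > d then 1 else 0)))"

end

theory Submission imports Defs begin

lemma ode_sol:
  fixes g g1 g2 :: "real \<Rightarrow> real" and s :: "real set"
  assumes cs: "convex s" and ne: "l1 \<noteq> l2"
    and d1: "\<And>x. x \<in> s \<Longrightarrow> (g has_real_derivative g1 x) (at x within s)"
    and d2: "\<And>x. x \<in> s \<Longrightarrow> (g1 has_real_derivative g2 x) (at x within s)"
    and eq: "\<And>x. x \<in> s \<Longrightarrow> g2 x = (l1 + l2) * g1 x - l1 * l2 * g x"
  shows "\<exists>A B. \<forall>x\<in>s. g x = A * exp (l1 * x) + B * exp (l2 * x)"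
proof -
  define q where "q x = (g1 x - l2 * g x) * exp (- l1 * x)" for x
  have "\<exists>C. \<forall>x\<in>s. q x = C"
  proof (rule has_field_derivative_zero_constant[OF cs])
    fix x assume x: "x \<in> s"
    have "(q has_real_derivative (g2 x - l2 * g1 x) * exp (- l1 * x) + (g1 x - l2 * g x) * (exp (- l1 * x) * (- l1))) (at x within s)"
      unfolding q_def using d1[OF x] d2[OF x]
      by (auto intro!: derivative_eq_intros)
    moreover have "(g2 x - l2 * g1 x) * exp (- l1 * x) + (g1 x - l2 * g x) * (exp (- l1 * x) * (- l1)) = (g2 x - ((l1 + l2) * g1 x - l1 * l2 * g x)) * exp (- l1 * x)"
      by (simp add: algebra_simps)
    moreover have "\<dots> = 0" using eq[OF x] by simp
    ultimately show "(q has_real_derivative 0) (at x within s)" by simp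
  qed
  then obtain C where C: "\<And>x. x \<in> s \<Longrightarrow> q x = C" by blast
  have p: "g1 x - l2 * g x = C * exp (l1 * x)" if x: "x \<in> s" for x
  proof -
    have "C * exp (l1 * x) = (g1 x - l2 * g x) * (exp (- l1 * x) * exp (l1 * x))"
      using C[OF x] by (simp add: q_def)
    also have "exp (- l1 * x) * exp (l1 * x) = 1" by (simp add: exp_add[symmetric])
    finally show ?thesis by simp
  qed
  define k where "k x = g x * exp (- l2 * x) - C / (l1 - l2) * exp ((l1 - l2) * x)" for x
  have "\<exists>D. \<forall>x\<in>s. k x = D"
  proof (rule has_field_derivative_zero_constant[OF cs])
    fix x assume x: "x \<in> s"
    have "(k has_real_derivative g1 x * exp (- l2 * x) + g x * (exp (- l2 * x) * (- l2)) - C / (l1 - l2) * (exp ((l1 - l2) * x) * (l1 - l2))) (at x within s)"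
      unfolding k_def using d1[OF x] d2[OF x]
      by (auto intro!: derivative_eq_intros)
    moreover have "g1 x * exp (- l2 * x) + g x * (exp (- l2 * x) * (- l2)) - C / (l1 - l2) * (exp ((l1 - l2) * x) * (l1 - l2)) = 0"
    proof -
      have e: "exp ((l1 - l2) * x) = exp (l1 * x) * exp (- l2 * x)" by (simp add: exp_add[symmetric] algebra_simps)
      have "g1 x * exp (- l2 * x) + g x * (exp (- l2 * x) * (- l2)) = (g1 x - l2 * g x) * exp (- l2 * x)"
        by (simp add: algebra_simps)
      also have "\<dots> = C * exp (l1 * x) * exp (- l2 * x)" using p[OF x] by simp
      finally show ?thesis using ne e by simp
    qed
    ultimately show "(k has_real_derivative 0) (at x within s)" by simp
  qed
  then obtain D where D: "\<And>x. x \<in> s \<Longrightarrow> k x = D" by blast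
  show ?thesis
  proof (intro exI ballI)
    fix x assume x: "x \<in> s"
    have "g x * exp (- l2 * x) = D + C / (l1 - l2) * exp ((l1 - l2) * x)"
      using D[OF x] by (simp add: k_def)
    hence "g x * exp (- l2 * x) * exp (l2 * x) = (D + C / (l1 - l2) * exp ((l1 - l2) * x)) * exp (l2 * x)" by simp
    moreover have "exp (- l2 * x) * exp (l2 * x) = 1" by (simp add: exp_add[symmetric])
    moreover have "exp ((l1 - l2) * x) * exp (l2 * x) = exp (l1 * x)" by (simp add: exp_add[symmetric] algebra_simps)
    ultimately show "g x = C / (l1 - l2) * exp (l1 * x) + D * exp (l2 * x)"
      by (simp add: algebra_simps)
  qed
qed

lemma theta_props:
  assumes "\<sigma> > 0" "r > 0"
  shows "theta1 \<mu> \<sigma> r u - theta2 \<mu> \<sigma> r u = 2 * (\<mu> - u) / \<sigma>\<^sup>2"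
    and "theta1 \<mu> \<sigma> r u * theta2 \<mu> \<sigma> r u = 2 * r / \<sigma>\<^sup>2"
    and "theta1 \<mu> \<sigma> r u + theta2 \<mu> \<sigma> r u > 0"
proof -
  let ?D = "(\<mu> - u)\<^sup>2 + 2 * r * \<sigma>\<^sup>2"
  have Dp: "?D > 0" using assms by (simp add: add_nonneg_pos)
  have sq: "sqrt ?D ^ 2 = ?D" using Dp by simp
  show "theta1 \<mu> \<sigma> r u - theta2 \<mu> \<sigma> r u = 2 * (\<mu> - u) / \<sigma>\<^sup>2"
    unfolding theta1_def theta2_def by (simp add: diff_divide_distrib[symmetric])
  show "theta1 \<mu> \<sigma> r u * theta2 \<mu> \<sigma> r u = 2 * r / \<sigma>\<^sup>2"
    unfolding theta1_def theta2_def using assms sq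
    by (simp add: field_simps power2_eq_square)
  show "theta1 \<mu> \<sigma> r u + theta2 \<mu> \<sigma> r u > 0"
    unfolding theta1_def theta2_def using assms Dp
    by (simp add: add_divide_distrib[symmetric])
qed

lemma piece:
  fixes h h1 h2 :: "real \<Rightarrow> real" and s :: "real set"
  assumes "\<sigma> > 0" "r > 0" "convex s"
    and d1: "\<And>x. x \<in> s \<Longrightarrow> (h has_real_derivative h1 x) (at x within s)"
    and d2: "\<And>x. x \<in> s \<Longrightarrow> (h1 has_real_derivative h2 x) (at x within s)"
    and eq: "\<And>x. x \<in> s \<Longrightarrow> - r * h x - \<mu> * h1 x + \<sigma>\<^sup>2 / 2 * h2 x + (\<beta> + h1 x) * u = R"
  shows "\<exists>A B. \<forall>x\<in>s. h x = (u * \<beta> - R) / r + A * exp (theta1 \<mu> \<sigma> r u * x) + B * exp (- theta2 \<mu> \<sigma> r u * x)"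
proof -
  let ?l1 = "theta1 \<mu> \<sigma> r u" and ?l2 = "- theta2 \<mu> \<sigma> r u"
  let ?P = "(u * \<beta> - R) / r"
  note th = theta_props[OF assms(1,2), of \<mu> u]
  have "\<exists>A B. \<forall>x\<in>s. (\<lambda>x. h x - ?P) x = A * exp (?l1 * x) + B * exp (?l2 * x)"
  proof (rule ode_sol[OF assms(3)])
    show "?l1 \<noteq> ?l2" using th(3) by linarith
    fix x assume x: "x \<in> s"
    show "((\<lambda>x. h x - ?P) has_real_derivative h1 x) (at x within s)"
      using d1[OF x] by (auto intro!: derivative_eq_intros)
    show "(h1 has_real_derivative h2 x) (at x within s)" using d2[OF x] .
    have e: "h2 x = 2 / \<sigma>\<^sup>2 * (R + r * h x + \<mu> * h1 x - (\<beta> + h1 x) * u)"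
      using eq[OF x] assms(1) by (simp add: field_simps)
    have s1: "?l1 + ?l2 = 2 * (\<mu> - u) / \<sigma>\<^sup>2" using th(1) by simp
    have s2: "?l1 * ?l2 = - (2 * r / \<sigma>\<^sup>2)" using th(2) by simp
    show "h2 x = (?l1 + ?l2) * h1 x - ?l1 * ?l2 * (h x - ?P)"
      unfolding s1 s2 e using assms(1,2) by (simp add: field_simps)
  qed
  then obtain A B where "\<forall>x\<in>s. h x - ?P = A * exp (?l1 * x) + B * exp (?l2 * x)" by blast
  thus ?thesis by (intro exI[of _ A] exI[of _ B]) (auto simp: algebra_simps)
qed

lemma sup_lin:
  fixes u0 c :: real assumes "u0 > 0"
  shows "(SUP u\<in>{0..u0}. c * u) = (if c \<ge> 0 then c * u0 else 0)"
proof (cases "c \<ge> 0")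
  case True
  show ?thesis using True assms
    by (auto intro!: cSup_eq_maximum simp: mult_left_mono)
next
  case False
  have "(SUP u\<in>{0..u0}. c * u) = c * 0"
    using False assms by (intro cSup_eq_maximum) (auto simp: mult_nonpos_nonneg)
  then show ?thesis using False by simp
qed

theorem lemma2p3:
  fixes \<mu> \<sigma> u0 r \<beta> d :: real and h :: "real \<Rightarrow> real"
  assumes "\<sigma> > 0" "u0 > 0" "r > 0" "\<beta> > 0" "d > 0"
    and sol: "hjb_solution \<mu> \<sigma> u0 r \<beta> d h"
    and decr: "\<forall>x y. 0 \<le> x \<and> x \<le> y \<longrightarrow> h y \<le> h x"
    and h'0: "(h has_real_derivative 0) (at 0 within {0..})"
  shows "\<exists>zf zg A1 B1 A2 B2 a1 b1 a2 b2. zf \<in> {0<..d} \<and> zg \<in> {d..} \<and>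
    (\<forall>z. 0 \<le> z \<and> z \<le> zf \<longrightarrow>
       h z = \<beta> * u0 / r + A2 * exp (theta1 \<mu> \<sigma> r u0 * z) + B2 * exp (- theta2 \<mu> \<sigma> r u0 * z)) \<and>
    (\<forall>z. zf < z \<and> z \<le> d \<longrightarrow>
       h z = A1 * exp (theta1 \<mu> \<sigma> r 0 * z) + B1 * exp (- theta2 \<mu> \<sigma> r 0 * z)) \<and>
    (\<forall>z. d < z \<and> z \<le> zg \<longrightarrow>
       h z = - 1 / r + a1 * exp (theta1 \<mu> \<sigma> r 0 * z) + b1 * exp (- theta2 \<mu> \<sigma> r 0 * z)) \<and>
    (\<forall>z. zg \<le> z \<and> d < z \<longrightarrow>
       h z = (\<beta> * u0 - 1) / r + a2 * exp (theta1 \<mu> \<sigma> r u0 * z) + b2 * exp (- theta2 \<mu> \<sigma> r u0 * z))"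
proof -
  note pos = assms(1-5)
  obtain h1 h2 where
    bnd: "\<And>z. z \<ge> 0 \<Longrightarrow> (\<beta> * u0 - 1) / r \<le> h z \<and> h z \<le> \<beta> * u0 / r" and
    D1: "\<And>z. z \<ge> 0 \<Longrightarrow> (h has_real_derivative h1 z) (at z within {0..})" and
    wcont: "continuous_on {0..} h1" and
    D2: "\<And>z. z \<in> {0..d} \<Longrightarrow> (h1 has_real_derivative h2 z) (at z within {0..d})" and
    D2r: "\<And>z. z > d \<Longrightarrow> (h1 has_real_derivative h2 z) (at z)" and
    ode0: "\<And>z. z \<ge> 0 \<Longrightarrow> - r * h z - \<mu> * h1 z + \<sigma>\<^sup>2 / 2 * h2 z
                  + (SUP u\<in>{0..u0}. (\<beta> + h1 z) * u) = (if z > d then 1 else 0)"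
    using sol unfolding hjb_solution_def by blast
  have Sval: "(SUP u\<in>{0..u0}. (\<beta> + h1 z) * u) = (if \<beta> + h1 z \<ge> 0 then (\<beta> + h1 z) * u0 else 0)" for z
    using sup_lin[OF pos(2)] by blast
  have ode: "- r * h z - \<mu> * h1 z + \<sigma>\<^sup>2 / 2 * h2 z
                  + (if \<beta> + h1 z \<ge> 0 then (\<beta> + h1 z) * u0 else 0) = (if z > d then 1 else 0)"
    if "z \<ge> 0" for z using ode0[OF that] Sval[of z] by simp
  have D1o: "(h has_real_derivative h1 z) (at z)" if "z > 0" for z
  proof -
    have "(h has_real_derivative h1 z) (at z within {0<..})"
      by (rule DERIV_subset[OF D1[of z]]) (use that in auto)
    moreover have "at z within {0<..} = at z" using that by (intro at_within_open) auto
    ultimately show ?thesis by simp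
  qed
  have D2o: "(h1 has_real_derivative h2 z) (at z)" if "0 < z" "z \<noteq> d" for z
  proof (cases "z > d")
    case True thus ?thesis using D2r by simp
  next
    case False
    hence "z \<in> interior {0..d}" using that by auto
    hence "at z within {0..d} = at z" by (rule at_within_interior)
    moreover have "(h1 has_real_derivative h2 z) (at z within {0..d})" using D2[of z] that False by simp
    ultimately show ?thesis by simp
  qed
  have w0: "h1 0 = 0"
  proof (rule has_field_derivative_unique[OF D1[of 0] h'0])
    show "at 0 within {0::real..} \<noteq> bot"
    proof
      assume "at 0 within {0::real..} = bot"
      moreover have "at_right (0::real) \<le> at 0 within {0..}" by (rule at_le) auto
      ultimately have "at_right (0::real) = bot" using bot_unique by metis
      thus False by simp
    qed
  qed simp
  have iscont: "isCont h1 z" if "z > 0" for z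
  proof -
    have "continuous_on {0<..} h1" using wcont by (rule continuous_on_subset) auto
    thus ?thesis using that continuous_on_eq_continuous_at[of "{0<..}" h1] by auto
  qed
  have dip: "h1 t \<ge> -\<beta>"
    if ab: "a < b" and cases: "(0 \<le> a \<and> b \<le> d) \<or> d < a" and ha: "h1 a \<ge> -\<beta>" and hb: "h1 b \<ge> -\<beta>"
      and t: "a \<le> t" "t \<le> b" for a b t
  proof (rule ccontr)
    assume nt: "\<not> h1 t \<ge> -\<beta>"
    have a0: "a \<ge> 0" using cases pos by auto
    have "continuous_on {a..b} h1" using wcont by (rule continuous_on_subset) (use a0 in auto)
    then obtain m where m: "m \<in> {a..b}" "\<And>y. y \<in> {a..b} \<Longrightarrow> h1 m \<le> h1 y"
      using continuous_attains_inf[of "{a..b}" h1] ab by auto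
    have hm: "h1 m < -\<beta>" using m(2)[of t] t nt by auto
    have am: "a < m" using m(1) hm ha by (cases "a = m") auto
    have mb: "m < b" using m(1) hm hb by (cases "b = m") auto
    define R0 where "R0 = (if d < a then 1 else (0::real))"
    have inside: "x > 0 \<and> x \<noteq> d \<and> (if x > d then 1 else 0) = R0" if "a < x" "x < b" for x
      using that cases a0 unfolding R0_def by auto
    have h2m: "h2 m = 0"
    proof (rule DERIV_local_min[OF D2o])
      show "0 < m" "m \<noteq> d" using inside[OF am mb] by auto
      show "0 < min (m - a) (b - m)" using am mb by simp
      show "\<forall>y. \<bar>m - y\<bar> < min (m - a) (b - m) \<longrightarrow> h1 m \<le> h1 y"
      proof (intro allI impI)
        fix y assume "\<bar>m - y\<bar> < min (m - a) (b - m)"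
        hence "a \<le> y" "y \<le> b" by (auto simp: abs_less_iff)
        thus "h1 m \<le> h1 y" using m(2) by auto
      qed
    qed
    define G where "G x = R0 + r * h x + \<mu> * h1 x" for x
    have Gm: "G m = 0"
      using ode[of m] inside[OF am mb] hm h2m unfolding G_def by auto
    have "DERIV G m :> r * h1 m + \<mu> * h2 m"
      unfolding G_def using D1o[of m] D2o[of m] inside[OF am mb]
      by (auto intro!: derivative_eq_intros)
    moreover have "r * h1 m + \<mu> * h2 m < 0" using h2m hm pos
      by (simp add: mult_pos_neg)
    ultimately obtain \<delta> where \<delta>: "\<delta> > 0" "\<And>e. e > 0 \<Longrightarrow> e < \<delta> \<Longrightarrow> G m > G (m + e)"
      using DERIV_neg_dec_right by blast
    define e where "e = min \<delta> (b - m) / 2"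
    have e1: "e \<le> (b - m) / 2" "e \<le> \<delta> / 2" "e > 0" unfolding e_def using \<delta>(1) mb by (auto simp: min_def)
    have e: "e > 0" "e < \<delta>" "m + e < b"
      subgoal using e1 by linarith
      subgoal using e1 \<delta>(1) by linarith
      subgoal using e1 mb by (simp add: field_simps)
      done
    have neg: "h2 \<xi> < 0" if "m < \<xi>" "\<xi> \<le> m + e" for \<xi>
    proof -
      have "G \<xi> < 0" using \<delta>(2)[of "\<xi> - m"] that e Gm by auto
      moreover have "\<sigma>\<^sup>2 / 2 * h2 \<xi> = G \<xi> - (if \<beta> + h1 \<xi> \<ge> 0 then (\<beta> + h1 \<xi>) * u0 else 0)"
        using ode[of \<xi>] inside[of \<xi>] that am e unfolding G_def by auto
      moreover have "(if \<beta> + h1 \<xi> \<ge> 0 then (\<beta> + h1 \<xi>) * u0 else 0) \<ge> 0" using pos by auto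
      ultimately have "\<sigma>\<^sup>2 / 2 * h2 \<xi> < 0" by linarith
      thus ?thesis using pos by (simp add: mult_less_0_iff)
    qed
    have "\<exists>\<xi>. m < \<xi> \<and> \<xi> < m + e \<and> h1 (m + e) - h1 m = (m + e - m) * h2 \<xi>"
    proof (rule MVT2[of m "m + e" h1 h2])
      show "m < m + e" using e by simp
      fix x assume "m \<le> x" "x \<le> m + e"
      hence "a < x" "x < b" using am e by auto
      thus "DERIV h1 x :> h2 x" using D2o inside by blast
    qed
    then obtain \<xi> where xi: "m < \<xi>" "\<xi> < m + e" "h1 (m + e) - h1 m = (m + e - m) * h2 \<xi>" by blast
    have "e * h2 \<xi> < 0" using e(1) neg[of \<xi>] xi(1,2) by (simp add: mult_pos_neg)
    hence "h1 (m + e) < h1 m" using xi(3) by simp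
    moreover have "h1 m \<le> h1 (m + e)" using m(2)[of "m + e"] am e by auto
    ultimately show False by simp
  qed
  have notail: "\<exists>b>t. h1 b \<ge> -\<beta>" if "t > d" for t
  proof (rule ccontr)
    assume "\<not> ?thesis"
    hence nb: "\<And>b. b > t \<Longrightarrow> h1 b < -\<beta>" by (meson not_le)
    define N where "N = 1 / (r * \<beta>) + 1"
    have N: "N > 0" unfolding N_def by (intro add_pos_pos divide_pos_pos mult_pos_pos) (use pos in auto)
    have "\<exists>\<xi>. t < \<xi> \<and> \<xi> < t + N \<and> h (t + N) - h t = (t + N - t) * h1 \<xi>"
    proof (rule MVT2[of t "t + N" h h1])
      show "t < t + N" using N by simp
      fix x assume "t \<le> x" "x \<le> t + N"
      thus "DERIV h x :> h1 x" using D1o that pos by simp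
    qed
    then obtain \<xi> where xi: "t < \<xi>" "\<xi> < t + N" "h (t + N) - h t = (t + N - t) * h1 \<xi>" by blast
    have "N * h1 \<xi> < N * (-\<beta>)" using nb[OF xi(1)] N by (rule mult_strict_left_mono)
    moreover have "(\<beta> * u0 - 1) / r \<le> h (t + N)" "h t \<le> \<beta> * u0 / r" using bnd[of t] bnd[of "t+N"] that N pos by auto
    ultimately have "(\<beta> * u0 - 1) / r - \<beta> * u0 / r < - N * \<beta>" using xi(3) by simp
    moreover have "(\<beta> * u0 - 1) / r - \<beta> * u0 / r = - 1 / r" by (simp add: diff_divide_distrib)
    moreover have "N * \<beta> = 1 / r + \<beta>" using pos unfolding N_def by (simp add: field_simps)
    ultimately show False using pos by simp
  qed
  obtain zf where zf: "0 < zf" "zf \<le> d" "\<And>z. 0 \<le> z \<Longrightarrow> z \<le> zf \<Longrightarrow> h1 z \<ge> -\<beta>"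
     "\<And>z. zf < z \<Longrightarrow> z \<le> d \<Longrightarrow> h1 z \<le> -\<beta>"
  proof -
    define Sf where "Sf = {z. 0 \<le> z \<and> z \<le> d \<and> h1 z < -\<beta>}"
    show ?thesis
    proof (cases "Sf = {}")
      case True
      show ?thesis by (rule that[of d]) (use True pos in \<open>auto simp: Sf_def\<close>)
    next
      case False
      have bb: "bdd_below Sf" unfolding Sf_def by (rule bdd_belowI[of _ 0]) auto
      have "((h1 \<longlongrightarrow> h1 0) (at 0 within {0..}))" using wcont unfolding continuous_on_def by auto
      hence "eventually (\<lambda>x. -\<beta> < h1 x) (at 0 within {0..})"
        using w0 pos by (intro order_tendstoD(1)) auto
      then obtain \<delta> where \<delta>: "\<delta> > 0" "\<And>x. x \<in> {0..} \<Longrightarrow> x \<noteq> 0 \<Longrightarrow> dist x 0 < \<delta> \<Longrightarrow> -\<beta> < h1 x"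
        unfolding eventually_at by blast
      have ge: "\<delta> \<le> z" if "z \<in> Sf" for z
      proof (rule ccontr)
        assume "\<not> \<delta> \<le> z"
        moreover have "z \<ge> 0" "h1 z < -\<beta>" using that unfolding Sf_def by auto
        ultimately show False using \<delta>(2)[of z] w0 pos by (cases "z = 0") auto
      qed
      define zf where "zf = Inf Sf"
      have zfp: "zf > 0" using cInf_greatest[OF False ge] \<delta>(1) unfolding zf_def by auto
      obtain t0 where t0: "t0 \<in> Sf" using False by blast
      have zfd: "zf \<le> d" using cInf_lower[OF t0 bb] t0 unfolding zf_def Sf_def by auto
      have below: "h1 z \<ge> -\<beta>" if "0 \<le> z" "z < zf" for z
      proof (rule ccontr)
        assume "\<not> ?thesis"
        hence "z \<in> Sf" using that zfd unfolding Sf_def by auto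
        thus False using cInf_lower[OF _ bb, of z] that unfolding zf_def by auto
      qed
      have atzf: "h1 zf \<ge> -\<beta>"
      proof (rule tendsto_lowerbound)
        show "(h1 \<longlongrightarrow> h1 zf) (at_left zf)"
          using iscont[OF zfp] unfolding isCont_def by (rule tendsto_mono[rotated]) (simp add: at_le)
        show "\<forall>\<^sub>F x in at_left zf. - \<beta> \<le> h1 x"
          using eventually_at_left_real[OF zfp] by eventually_elim (use below in auto)
      qed simp
      show ?thesis
      proof (rule that[of zf])
        fix z assume z: "0 \<le> z" "z \<le> zf"
        thus "h1 z \<ge> -\<beta>" using below atzf by (cases "z = zf") auto
      next
        fix z assume z: "zf < z" "z \<le> d"
        show "h1 z \<le> -\<beta>"
        proof (rule ccontr)
          assume nz: "\<not> ?thesis"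
          obtain t where t: "t \<in> Sf" "t < z" using cInf_less_iff[OF False bb] z unfolding zf_def by auto
          have "zf \<le> t" using cInf_lower[OF t(1) bb] unfolding zf_def .
          hence "h1 t \<ge> -\<beta>" using dip[of zf z t] z zfp atzf nz t by auto
          thus False using t unfolding Sf_def by auto
        qed
      qed (use zfp zfd in auto)
    qed
  qed
  obtain zg where zg: "d \<le> zg" "\<And>z. d < z \<Longrightarrow> z \<le> zg \<Longrightarrow> h1 z \<le> -\<beta>"
     "\<And>z. zg \<le> z \<Longrightarrow> d < z \<Longrightarrow> h1 z \<ge> -\<beta>"
  proof -
    define Sg where "Sg = {z. d < z \<and> h1 z < -\<beta>}"
    show ?thesis
    proof (cases "Sg = {}")
      case True
      show ?thesis by (rule that[of d]) (use True in \<open>auto simp: Sg_def\<close>)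
    next
      case False
      obtain t0 where t0: "t0 \<in> Sg" using False by blast
      obtain b0 where b0: "b0 > t0" "h1 b0 \<ge> -\<beta>" using notail[of t0] t0 unfolding Sg_def by auto
      have ub: "t \<le> b0" if tS: "t \<in> Sg" for t
      proof (rule ccontr)
        assume "\<not> t \<le> b0"
        moreover obtain b where "b > t" "h1 b \<ge> -\<beta>" using notail[of t] tS unfolding Sg_def by auto
        ultimately have "h1 t \<ge> -\<beta>" using dip[of b0 b t] b0 t0 unfolding Sg_def by auto
        thus False using tS unfolding Sg_def by auto
      qed
      have ba: "bdd_above Sg" using ub by (intro bdd_aboveI) 
      define zg where "zg = Sup Sg"
      have t0zg: "t0 \<le> zg" using cSup_upper[OF t0 ba] unfolding zg_def .
      have dzg: "d < zg" using t0zg t0 unfolding Sg_def by auto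
      have zgb: "zg \<le> b0" using cSup_least[OF False ub] unfolding zg_def .
      have below: "h1 z \<le> -\<beta>" if zz: "d < z" "z < zg" for z
      proof (rule ccontr)
        assume nz: "\<not> ?thesis"
        obtain t where t: "t \<in> Sg" "z < t" using less_cSup_iff[OF False ba] zz unfolding zg_def by auto
        have "t \<le> b0" using ub t(1) .
        hence "h1 t \<ge> -\<beta>" using dip[of z b0 t] zz nz t b0 by auto
        thus False using t unfolding Sg_def by auto
      qed
      have above: "h1 z \<ge> -\<beta>" if "zg < z" for z
      proof (rule ccontr)
        assume "\<not> ?thesis"
        hence "z \<in> Sg" using that dzg unfolding Sg_def by auto
        thus False using cSup_upper[OF _ ba, of z] that unfolding zg_def by auto
      qed
      have zgp: "zg > 0" using dzg pos by auto
      have at1: "h1 zg \<le> -\<beta>"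
      proof (rule tendsto_upperbound)
        show "(h1 \<longlongrightarrow> h1 zg) (at_left zg)"
          using iscont[OF zgp] unfolding isCont_def by (rule tendsto_mono[rotated]) (simp add: at_le)
        show "\<forall>\<^sub>F x in at_left zg. h1 x \<le> - \<beta>"
          using eventually_at_left_real[OF dzg] by eventually_elim (use below in auto)
      qed simp
      have at2: "h1 zg \<ge> -\<beta>"
      proof (rule tendsto_lowerbound)
        show "(h1 \<longlongrightarrow> h1 zg) (at_right zg)"
          using iscont[OF zgp] unfolding isCont_def by (rule tendsto_mono[rotated]) (simp add: at_le)
        show "\<forall>\<^sub>F x in at_right zg. - \<beta> \<le> h1 x"
        proof -
          have "eventually (\<lambda>x. x \<in> {zg<..<zg + 1}) (at_right zg)" by (rule eventually_at_right_real) simp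
          thus ?thesis by eventually_elim (use above in auto)
        qed
      qed simp
      show ?thesis
      proof (rule that[of zg])
        fix z assume "d < z" "z \<le> zg" thus "h1 z \<le> -\<beta>" using below at1 by (cases "z = zg") auto
      next
        fix z assume "zg \<le> z" "d < z" thus "h1 z \<ge> -\<beta>" using above at2 by (cases "z = zg") auto
      qed (use dzg in auto)
    qed
  qed
  have "\<exists>A B. \<forall>x\<in>{0..zf}. h x = (u0 * \<beta> - 0) / r + A * exp (theta1 \<mu> \<sigma> r u0 * x) + B * exp (- theta2 \<mu> \<sigma> r u0 * x)"
  proof (rule piece[OF pos(1) pos(3)])
    fix x assume x: "x \<in> {0..zf}"
    show "(h has_real_derivative h1 x) (at x within {0..zf})"
      by (rule DERIV_subset[OF D1[of x]]) (use x in auto)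
    show "(h1 has_real_derivative h2 x) (at x within {0..zf})"
      by (rule DERIV_subset[OF D2[of x]]) (use x zf in auto)
    show "- r * h x - \<mu> * h1 x + \<sigma>\<^sup>2 / 2 * h2 x + (\<beta> + h1 x) * u0 = 0"
      using ode[of x] x zf(2) zf(3)[of x] by auto
  qed simp
  then obtain A2 B2 where P1: "\<forall>x\<in>{0..zf}. h x = (u0 * \<beta> - 0) / r + A2 * exp (theta1 \<mu> \<sigma> r u0 * x) + B2 * exp (- theta2 \<mu> \<sigma> r u0 * x)" by blast
  have "\<exists>A B. \<forall>x\<in>{zf<..d}. h x = (0 * \<beta> - 0) / r + A * exp (theta1 \<mu> \<sigma> r 0 * x) + B * exp (- theta2 \<mu> \<sigma> r 0 * x)"
  proof (rule piece[OF pos(1) pos(3)])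
    fix x assume x: "x \<in> {zf<..d}"
    show "(h has_real_derivative h1 x) (at x within {zf<..d})"
      by (rule DERIV_subset[OF D1[of x]]) (use x zf in auto)
    show "(h1 has_real_derivative h2 x) (at x within {zf<..d})"
      by (rule DERIV_subset[OF D2[of x]]) (use x zf in auto)
    show "- r * h x - \<mu> * h1 x + \<sigma>\<^sup>2 / 2 * h2 x + (\<beta> + h1 x) * 0 = 0"
    proof -
      have "\<beta> + h1 x \<le> 0" using x zf(4)[of x] by auto
      hence "(if \<beta> + h1 x \<ge> 0 then (\<beta> + h1 x) * u0 else 0) = 0" by (cases "\<beta> + h1 x = 0") auto
      thus ?thesis using ode[of x] x zf(1) by auto
    qed
  qed simp
  then obtain A1 B1 where P2: "\<forall>x\<in>{zf<..d}. h x = (0 * \<beta> - 0) / r + A1 * exp (theta1 \<mu> \<sigma> r 0 * x) + B1 * exp (- theta2 \<mu> \<sigma> r 0 * x)" by blast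
  have "\<exists>A B. \<forall>x\<in>{d<..zg}. h x = (0 * \<beta> - 1) / r + A * exp (theta1 \<mu> \<sigma> r 0 * x) + B * exp (- theta2 \<mu> \<sigma> r 0 * x)"
  proof (rule piece[OF pos(1) pos(3)])
    fix x assume x: "x \<in> {d<..zg}"
    show "(h has_real_derivative h1 x) (at x within {d<..zg})"
      by (rule DERIV_subset[OF D1[of x]]) (use x pos in auto)
    show "(h1 has_real_derivative h2 x) (at x within {d<..zg})"
      by (rule has_field_derivative_at_within[OF D2r]) (use x in auto)
    show "- r * h x - \<mu> * h1 x + \<sigma>\<^sup>2 / 2 * h2 x + (\<beta> + h1 x) * 0 = 1"
    proof -
      have "\<beta> + h1 x \<le> 0" using x zg(2)[of x] by auto
      hence "(if \<beta> + h1 x \<ge> 0 then (\<beta> + h1 x) * u0 else 0) = 0" by (cases "\<beta> + h1 x = 0") auto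
      thus ?thesis using ode[of x] x pos by auto
    qed
  qed simp
  then obtain a1 b1 where P3: "\<forall>x\<in>{d<..zg}. h x = (0 * \<beta> - 1) / r + a1 * exp (theta1 \<mu> \<sigma> r 0 * x) + b1 * exp (- theta2 \<mu> \<sigma> r 0 * x)" by blast
  have cv: "convex {z. zg \<le> z \<and> d < z}"
  proof -
    have "{z. zg \<le> z \<and> d < z} = {zg..} \<inter> {d<..}" by auto
    thus ?thesis by (simp add: convex_Int)
  qed
  have "\<exists>A B. \<forall>x\<in>{z. zg \<le> z \<and> d < z}. h x = (u0 * \<beta> - 1) / r + A * exp (theta1 \<mu> \<sigma> r u0 * x) + B * exp (- theta2 \<mu> \<sigma> r u0 * x)"
  proof (rule piece[OF pos(1) pos(3) cv])
    fix x assume x: "x \<in> {z. zg \<le> z \<and> d < z}"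
    show "(h has_real_derivative h1 x) (at x within {z. zg \<le> z \<and> d < z})"
      by (rule DERIV_subset[OF D1[of x]]) (use x pos in auto)
    show "(h1 has_real_derivative h2 x) (at x within {z. zg \<le> z \<and> d < z})"
      by (rule has_field_derivative_at_within[OF D2r]) (use x in auto)
    show "- r * h x - \<mu> * h1 x + \<sigma>\<^sup>2 / 2 * h2 x + (\<beta> + h1 x) * u0 = 1"
      using ode[of x] x zg(3)[of x] pos by auto
  qed
  then obtain a2 b2 where P4: "\<forall>x\<in>{z. zg \<le> z \<and> d < z}. h x = (u0 * \<beta> - 1) / r + a2 * exp (theta1 \<mu> \<sigma> r u0 * x) + b2 * exp (- theta2 \<mu> \<sigma> r u0 * x)" by blast
  show ?thesis
    apply (rule exI[of _ zf], rule exI[of _ zg], rule exI[of _ A1], rule exI[of _ B1],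
           rule exI[of _ A2], rule exI[of _ B2], rule exI[of _ a1], rule exI[of _ b1],
           rule exI[of _ a2], rule exI[of _ b2])
    using zf(1,2) zg(1) P1 P2 P3 P4 by (auto simp: mult.commute)
qed

end
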